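(* Let $p\ge p_0>1$. Let $f,g\in L^p$ be functions whose supports have finite measure, with $\|g\|_{p_0}\le\|f\|_{p_0}$. Suppose there exists $\tau_1\in[0,\infty)$ such that $\int_\tau^\infty\lambda_g(s)\,ds\le\int_\tau^\infty\lambda_f(s)\,ds$ for $\tau\ge\tau_1$, and $\int_\tau^\infty\lambda_f(s)\,ds\le\int_\tau^\infty\lambda_g(s)\,ds$ for $\tau\le\tau_1$. Then $\|g\|_p\le\|f\|_p$.
   Context: $\lambda_f(\tau)=\mu\{|f|>\tau\}$ denotes the distribution function of a measurable function $f$ on a $\sigma$-finite measure space $(\Omega,\mu)$; $\|\cdot\|_p$ is the $L^p(\Omega)$ norm. *)

theory Defs
  imports "HOL-Analysis.Analysis"
begin

definition distfun :: "'a measure \<Rightarrow> ('a \<Rightarrow> 'b::real_normed_vector) \<Rightarrow> real \<Rightarrow> ennreal" where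
  "distfun M f \<tau> = emeasure M {x \<in> space M. \<tau> < norm (f x)}"

definition in_Lp :: "'a measure \<Rightarrow> real \<Rightarrow> ('a \<Rightarrow> 'b::{banach, second_countable_topology}) \<Rightarrow> bool" where
  "in_Lp M p f \<longleftrightarrow> f \<in> borel_measurable M \<and> integrable M (\<lambda>x. norm (f x) powr p)"

definition Lp_norm :: "'a measure \<Rightarrow> real \<Rightarrow> ('a \<Rightarrow> 'b::real_normed_vector) \<Rightarrow> real" where
  "Lp_norm M p f = (\<integral>x. norm (f x) powr p \<partial>M) powr (1 / p)"

end

theory Submission imports Defs begin

lemma LC2:
  assumes sf: "sigma_finite_measure M" and h[measurable]: "h \<in> borel_measurable M"
  shows "(\<integral>\<^sup>+ s. (\<integral>\<^sup>+x. indicator {x\<in>space M. s < (h x::real)} x \<partial>M) * indicator {\<tau>..} s \<partial>lborel)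
       = (\<integral>\<^sup>+x. ennreal (h x - \<tau>) \<partial>M)"
proof -
  interpret P: pair_sigma_finite M lborel
    by (intro pair_sigma_finite.intro sf sigma_finite_lborel)
  have meas: "(\<lambda>(x,s). indicator {x\<in>space M. s < (h x::real)} x * indicator {\<tau>..} s :: ennreal) \<in> borel_measurable (M \<Otimes>\<^sub>M lborel)"
  proof -
    have "(\<lambda>(x,s). indicator {x\<in>space M. s < (h x::real)} x * indicator {\<tau>..} s :: ennreal)
       = (\<lambda>y. indicator {y \<in> space (M \<Otimes>\<^sub>M lborel). snd y < h (fst y) \<and> \<tau> \<le> snd y} y)"
      by (auto simp: fun_eq_iff indicator_def space_pair_measure)
    also have "\<dots> \<in> borel_measurable (M \<Otimes>\<^sub>M lborel)"
      by (intro borel_measurable_indicator) measurable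
    finally show ?thesis .
  qed
  have "(\<integral>\<^sup>+ s. (\<integral>\<^sup>+x. indicator {x\<in>space M. s < (h x::real)} x \<partial>M) * indicator {\<tau>..} s \<partial>lborel)
     = (\<integral>\<^sup>+ s. (\<integral>\<^sup>+x. indicator {x\<in>space M. s < (h x::real)} x * indicator {\<tau>..} s \<partial>M) \<partial>lborel)"
    by (intro nn_integral_cong nn_integral_multc[symmetric]) simp
  also have "\<dots> = (\<integral>\<^sup>+x. (\<integral>\<^sup>+ s. indicator {x\<in>space M. s < (h x::real)} x * indicator {\<tau>..} s \<partial>lborel) \<partial>M)"
    using P.Fubini'[OF meas] by simp
  also have "\<dots> = (\<integral>\<^sup>+x. ennreal (h x - \<tau>) \<partial>M)"
  proof (intro nn_integral_cong)
    fix x assume x: "x \<in> space M"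
    have "(\<integral>\<^sup>+ s. indicator {x\<in>space M. s < (h x::real)} x * indicator {\<tau>..} s \<partial>lborel)
        = (\<integral>\<^sup>+ s. indicator {\<tau>..<h x} s \<partial>lborel)"
      using x by (intro nn_integral_cong) (auto simp: indicator_def)
    also have "\<dots> = emeasure lborel {\<tau>..<h x}" by simp
    also have "\<dots> = ennreal (h x - \<tau>)"
      by (cases "\<tau> \<le> h x") (auto simp: ennreal_neg)
    finally show "(\<integral>\<^sup>+ s. indicator {x\<in>space M. s < (h x::real)} x * indicator {\<tau>..} s \<partial>lborel) = ennreal (h x - \<tau>)" .
  qed
  finally show ?thesis .
qed

lemma LC1:
  assumes q: "1 < q" and c: "0 \<le> (c::real)"
  shows "(\<integral>\<^sup>+\<tau>. indicator {0<..} \<tau> * ennreal (\<tau> powr (q-2)) * ennreal (c - \<tau>) \<partial>lborel)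
         = ennreal (c powr q / (q*(q-1)))"
proof -
  have h1: "((\<lambda>t. t powr (q-2)) has_integral (c powr (q-1) / (q-1))) {0..c}"
    using has_integral_powr_from_0[of "q-2" c] q c by simp
  have h2: "((\<lambda>t. t powr (q-1)) has_integral (c powr q / q)) {0..c}"
    using has_integral_powr_from_0[of "q-1" c] q c by simp
  have "((\<lambda>t. c * t powr (q-2) - t powr (q-1)) has_integral (c * (c powr (q-1) / (q-1)) - c powr q / q)) {0..c}"
    by (intro has_integral_diff has_integral_mult_right h1 h2)
  moreover have "c * (c powr (q-1) / (q-1)) - c powr q / q = c powr q / (q*(q-1))"
  proof -
    have "c * c powr (q-1) = c powr q"
      using c q by (cases "c = 0") (auto simp: powr_mult_base)
    then show ?thesis using q by (simp add: field_simps)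
  qed
  moreover have "\<And>t. t \<in> {0..c} \<Longrightarrow> c * t powr (q-2) - t powr (q-1) = t powr (q-2) * (c - t)"
  proof -
    fix t :: real assume t: "t \<in> {0..c}"
    have "t * t powr (q-2) = t powr (q-1)"
      using t q by (cases "t = 0") (auto simp: powr_mult_base)
    then show "c * t powr (q-2) - t powr (q-1) = t powr (q-2) * (c - t)" by (simp add: algebra_simps)
  qed
  ultimately have hi: "((\<lambda>t. t powr (q-2) * (c - t)) has_integral (c powr q / (q*(q-1)))) {0..c}"
    by (metis (no_types, lifting) has_integral_cong)
  have "(\<integral>\<^sup>+\<tau>. indicator {0<..} \<tau> * ennreal (\<tau> powr (q-2)) * ennreal (c - \<tau>) \<partial>lborel)
      = (\<integral>\<^sup>+\<tau>. ennreal (indicator {0..c} \<tau> * (\<tau> powr (q-2) * (c - \<tau>))) \<partial>lborel)"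
    by (intro nn_integral_cong) (auto simp: indicator_def ennreal_mult[symmetric] ennreal_neg)
  also have "\<dots> = ennreal (c powr q / (q*(q-1)))"
    by (rule nn_integral_has_integral_lebesgue[OF _ hi]) auto
  finally show ?thesis .
qed

lemma LC:
  assumes sf: "sigma_finite_measure M" and h[measurable]: "h \<in> borel_measurable M"
    and hnn: "\<And>x. 0 \<le> h x" and q: "1 < q"
  shows "(\<integral>\<^sup>+x. ennreal (h x powr q) \<partial>M) = ennreal (q*(q-1)) *
     (\<integral>\<^sup>+\<tau>. indicator {0<..} \<tau> * ennreal (\<tau> powr (q-2)) *
        (\<integral>\<^sup>+ s\<in>{\<tau>..}. emeasure M {x\<in>space M. s < (h x::real)} \<partial>lborel) \<partial>lborel)"
proof -
  interpret P: pair_sigma_finite M lborel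
    by (intro pair_sigma_finite.intro sf sigma_finite_lborel)
  have e: "emeasure M {x\<in>space M. s < h x} = (\<integral>\<^sup>+x. indicator {x\<in>space M. s < (h x::real)} x \<partial>M)" for s
    using h by (subst nn_integral_indicator) auto
  have meas: "(\<lambda>(x,\<tau>). indicator {0<..} \<tau> * ennreal (\<tau> powr (q-2)) * ennreal (h x - \<tau>)) \<in> borel_measurable (M \<Otimes>\<^sub>M lborel)"
    by measurable
  have "(\<integral>\<^sup>+\<tau>. indicator {0<..} \<tau> * ennreal (\<tau> powr (q-2)) *
        (\<integral>\<^sup>+ s\<in>{\<tau>..}. emeasure M {x\<in>space M. s < (h x::real)} \<partial>lborel) \<partial>lborel)
     = (\<integral>\<^sup>+\<tau>. indicator {0<..} \<tau> * ennreal (\<tau> powr (q-2)) * (\<integral>\<^sup>+x. ennreal (h x - \<tau>) \<partial>M) \<partial>lborel)"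
    unfolding e LC2[OF sf h] ..
  also have "\<dots> = (\<integral>\<^sup>+\<tau>. (\<integral>\<^sup>+x. indicator {0<..} \<tau> * ennreal (\<tau> powr (q-2)) * ennreal (h x - \<tau>) \<partial>M) \<partial>lborel)"
    by (intro nn_integral_cong nn_integral_cmult[symmetric]) measurable
  also have "\<dots> = (\<integral>\<^sup>+x. (\<integral>\<^sup>+\<tau>. indicator {0<..} \<tau> * ennreal (\<tau> powr (q-2)) * ennreal (h x - \<tau>) \<partial>lborel) \<partial>M)"
    using P.Fubini'[OF meas] by simp
  also have "\<dots> = (\<integral>\<^sup>+x. ennreal (h x powr q / (q*(q-1))) \<partial>M)"
    by (intro nn_integral_cong LC1[OF q hnn])
  finally have eq: "(\<integral>\<^sup>+\<tau>. indicator {0<..} \<tau> * ennreal (\<tau> powr (q-2)) *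
        (\<integral>\<^sup>+ s\<in>{\<tau>..}. emeasure M {x\<in>space M. s < (h x::real)} \<partial>lborel) \<partial>lborel)
       = (\<integral>\<^sup>+x. ennreal (h x powr q / (q*(q-1))) \<partial>M)" .
  have "ennreal (q*(q-1)) * (\<integral>\<^sup>+x. ennreal (h x powr q / (q*(q-1))) \<partial>M)
      = (\<integral>\<^sup>+x. ennreal (q*(q-1)) * ennreal (h x powr q / (q*(q-1))) \<partial>M)"
    by (intro nn_integral_cmult[symmetric]) measurable
  also have "\<dots> = (\<integral>\<^sup>+x. ennreal (h x powr q) \<partial>M)"
    using q by (intro nn_integral_cong) (simp add: ennreal_mult[symmetric])
  finally show ?thesis unfolding eq by simp
qed

lemma key_ineq:
  fixes Ff Fg :: "real \<Rightarrow> ennreal" and p p0 \<tau>1 :: real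
  assumes [measurable]: "Ff \<in> borel_measurable borel" "Fg \<in> borel_measurable borel"
    and pp: "p0 \<le> p" and t1: "0 \<le> \<tau>1"
    and hyp1: "\<And>\<tau>. \<tau>1 \<le> \<tau> \<Longrightarrow> Fg \<tau> \<le> Ff \<tau>"
    and hyp2: "\<And>\<tau>. 0 \<le> \<tau> \<Longrightarrow> \<tau> \<le> \<tau>1 \<Longrightarrow> Ff \<tau> \<le> Fg \<tau>"
    and B: "(\<integral>\<^sup>+\<tau>. indicator {0<..} \<tau> * ennreal (\<tau> powr (p0-2)) * Fg \<tau> \<partial>lborel)
          \<le> (\<integral>\<^sup>+\<tau>. indicator {0<..} \<tau> * ennreal (\<tau> powr (p0-2)) * Ff \<tau> \<partial>lborel)"
    and Bfin: "(\<integral>\<^sup>+\<tau>. indicator {0<..} \<tau> * ennreal (\<tau> powr (p0-2)) * Ff \<tau> \<partial>lborel) < \<infinity>"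
  shows "(\<integral>\<^sup>+\<tau>. indicator {0<..} \<tau> * ennreal (\<tau> powr (p-2)) * Fg \<tau> \<partial>lborel)
          \<le> (\<integral>\<^sup>+\<tau>. indicator {0<..} \<tau> * ennreal (\<tau> powr (p-2)) * Ff \<tau> \<partial>lborel)"
proof -
  define I1 where "I1 = {0<..<\<tau>1}"
  define I2 where "I2 = {0<..} \<inter> {\<tau>1..}"
  define c where "c = \<tau>1 powr (p - p0)"
  have [measurable]: "I1 \<in> sets borel" "I2 \<in> sets borel" unfolding I1_def I2_def by auto
  have ptw1: "indicator {0<..} t * w * G = indicator I1 t * w * F + indicator I2 t * w * G + indicator I1 t * w * (G - F)"
    if "t \<in> I1 \<Longrightarrow> F \<le> G" for t and w F G :: ennreal
    using that by (cases "t \<in> I1"; cases "t \<in> I2")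
      (auto simp: I1_def I2_def indicator_def add_diff_inverse_ennreal distrib_left[symmetric])
  have ptw2: "indicator {0<..} t * w * F = indicator I1 t * w * F + indicator I2 t * w * G + indicator I2 t * w * (F - G)"
    if "t \<in> I2 \<Longrightarrow> G \<le> F" for t and w F G :: ennreal
    using that by (cases "t \<in> I1"; cases "t \<in> I2")
      (auto simp: I1_def I2_def indicator_def add_diff_inverse_ennreal distrib_left[symmetric])
  have in1: "t \<in> I1 \<Longrightarrow> Ff t \<le> Fg t" for t using hyp2 by (auto simp: I1_def)
  have in2: "t \<in> I2 \<Longrightarrow> Fg t \<le> Ff t" for t using hyp1 by (auto simp: I2_def)
  have decomp: "(\<integral>\<^sup>+\<tau>. indicator {0<..} \<tau> * ennreal (\<tau> powr r) * Fg \<tau> \<partial>lborel)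
     = (\<integral>\<^sup>+\<tau>. indicator I1 \<tau> * ennreal (\<tau> powr r) * Ff \<tau> + indicator I2 \<tau> * ennreal (\<tau> powr r) * Fg \<tau> \<partial>lborel)
     + (\<integral>\<^sup>+\<tau>. indicator I1 \<tau> * ennreal (\<tau> powr r) * (Fg \<tau> - Ff \<tau>) \<partial>lborel)"
     "(\<integral>\<^sup>+\<tau>. indicator {0<..} \<tau> * ennreal (\<tau> powr r) * Ff \<tau> \<partial>lborel)
     = (\<integral>\<^sup>+\<tau>. indicator I1 \<tau> * ennreal (\<tau> powr r) * Ff \<tau> + indicator I2 \<tau> * ennreal (\<tau> powr r) * Fg \<tau> \<partial>lborel)
     + (\<integral>\<^sup>+\<tau>. indicator I2 \<tau> * ennreal (\<tau> powr r) * (Ff \<tau> - Fg \<tau>) \<partial>lborel)" for r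
  proof -
    show "(\<integral>\<^sup>+\<tau>. indicator {0<..} \<tau> * ennreal (\<tau> powr r) * Fg \<tau> \<partial>lborel)
     = (\<integral>\<^sup>+\<tau>. indicator I1 \<tau> * ennreal (\<tau> powr r) * Ff \<tau> + indicator I2 \<tau> * ennreal (\<tau> powr r) * Fg \<tau> \<partial>lborel)
     + (\<integral>\<^sup>+\<tau>. indicator I1 \<tau> * ennreal (\<tau> powr r) * (Fg \<tau> - Ff \<tau>) \<partial>lborel)"
      by (subst nn_integral_add[symmetric], measurable, intro nn_integral_cong ptw1 in1)
    show "(\<integral>\<^sup>+\<tau>. indicator {0<..} \<tau> * ennreal (\<tau> powr r) * Ff \<tau> \<partial>lborel)
     = (\<integral>\<^sup>+\<tau>. indicator I1 \<tau> * ennreal (\<tau> powr r) * Ff \<tau> + indicator I2 \<tau> * ennreal (\<tau> powr r) * Fg \<tau> \<partial>lborel)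
     + (\<integral>\<^sup>+\<tau>. indicator I2 \<tau> * ennreal (\<tau> powr r) * (Ff \<tau> - Fg \<tau>) \<partial>lborel)"
      by (subst nn_integral_add[symmetric], measurable, intro nn_integral_cong ptw2 in2)
  qed
  define X where "X = (\<integral>\<^sup>+\<tau>. indicator I1 \<tau> * ennreal (\<tau> powr (p0-2)) * Ff \<tau> + indicator I2 \<tau> * ennreal (\<tau> powr (p0-2)) * Fg \<tau> \<partial>lborel)"
  define E1 where "E1 = (\<integral>\<^sup>+\<tau>. indicator I1 \<tau> * ennreal (\<tau> powr (p0-2)) * (Fg \<tau> - Ff \<tau>) \<partial>lborel)"
  define E2 where "E2 = (\<integral>\<^sup>+\<tau>. indicator I2 \<tau> * ennreal (\<tau> powr (p0-2)) * (Ff \<tau> - Fg \<tau>) \<partial>lborel)"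
  have "X + E1 \<le> X + E2" using B unfolding decomp X_def E1_def E2_def .
  moreover have "X \<noteq> \<infinity>"
  proof -
    have "X \<le> X + E2" by simp
    also have "\<dots> < \<infinity>" using Bfin unfolding decomp X_def E2_def .
    finally show ?thesis by simp
  qed
  ultimately have E12: "E1 \<le> E2" by (simp add: ennreal_add_left_cancel_le)
  have pw: "t powr (p-2) = t powr (p0-2) * t powr (p-p0)" if "0 < t" for t :: real
    using that by (simp add: powr_add[symmetric])
  have D1: "(\<integral>\<^sup>+\<tau>. indicator I1 \<tau> * ennreal (\<tau> powr (p-2)) * (Fg \<tau> - Ff \<tau>) \<partial>lborel) \<le> ennreal c * E1"
  proof -
    have "(\<integral>\<^sup>+\<tau>. indicator I1 \<tau> * ennreal (\<tau> powr (p-2)) * (Fg \<tau> - Ff \<tau>) \<partial>lborel)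
       \<le> (\<integral>\<^sup>+\<tau>. ennreal c * (indicator I1 \<tau> * ennreal (\<tau> powr (p0-2)) * (Fg \<tau> - Ff \<tau>)) \<partial>lborel)"
    proof (intro nn_integral_mono)
      fix t :: real
      show "indicator I1 t * ennreal (t powr (p-2)) * (Fg t - Ff t) \<le> ennreal c * (indicator I1 t * ennreal (t powr (p0-2)) * (Fg t - Ff t))"
      proof (cases "t \<in> I1")
        case True
        then have t: "0 < t" "t \<le> \<tau>1" by (auto simp: I1_def)
        have "t powr (p-p0) \<le> c" unfolding c_def using t pp by (intro powr_mono2) auto
        then have "t powr (p-2) \<le> c * t powr (p0-2)" using t by (simp add: pw mult.commute mult_left_mono)
        then have "ennreal (t powr (p-2)) \<le> ennreal c * ennreal (t powr (p0-2))"
          using t by (simp add: ennreal_mult[symmetric] c_def)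
        then have "ennreal (t powr (p-2)) * (Fg t - Ff t) \<le> (ennreal c * ennreal (t powr (p0-2))) * (Fg t - Ff t)"
          by (rule mult_right_mono) simp
        then show ?thesis using True by (simp add: mult.assoc)
      qed simp
    qed
    also have "\<dots> = ennreal c * E1" unfolding E1_def by (rule nn_integral_cmult) measurable
    finally show ?thesis .
  qed
  have D2: "ennreal c * E2 \<le> (\<integral>\<^sup>+\<tau>. indicator I2 \<tau> * ennreal (\<tau> powr (p-2)) * (Ff \<tau> - Fg \<tau>) \<partial>lborel)"
  proof -
    have "ennreal c * E2 = (\<integral>\<^sup>+\<tau>. ennreal c * (indicator I2 \<tau> * ennreal (\<tau> powr (p0-2)) * (Ff \<tau> - Fg \<tau>)) \<partial>lborel)"
      unfolding E2_def by (rule nn_integral_cmult[symmetric]) measurable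
    also have "\<dots> \<le> (\<integral>\<^sup>+\<tau>. indicator I2 \<tau> * ennreal (\<tau> powr (p-2)) * (Ff \<tau> - Fg \<tau>) \<partial>lborel)"
    proof (intro nn_integral_mono)
      fix t :: real
      show "ennreal c * (indicator I2 t * ennreal (t powr (p0-2)) * (Ff t - Fg t)) \<le> indicator I2 t * ennreal (t powr (p-2)) * (Ff t - Fg t)"
      proof (cases "t \<in> I2")
        case True
        then have t: "0 < t" "\<tau>1 \<le> t" by (auto simp: I2_def)
        have "c \<le> t powr (p-p0)" unfolding c_def using t pp t1 by (intro powr_mono2) auto
        then have "c * t powr (p0-2) \<le> t powr (p-2)" using t by (simp add: pw mult.commute mult_left_mono)
        then have "ennreal c * ennreal (t powr (p0-2)) \<le> ennreal (t powr (p-2))"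
          using t by (simp add: ennreal_mult[symmetric] c_def)
        then have "(ennreal c * ennreal (t powr (p0-2))) * (Ff t - Fg t) \<le> ennreal (t powr (p-2)) * (Ff t - Fg t)"
          by (rule mult_right_mono) simp
        then show ?thesis using True by (simp add: mult.assoc)
      qed simp
    qed
    finally show ?thesis .
  qed
  have "ennreal c * E1 \<le> ennreal c * E2" using E12 by (rule mult_left_mono) simp
  with D1 D2 have "(\<integral>\<^sup>+\<tau>. indicator I1 \<tau> * ennreal (\<tau> powr (p-2)) * (Fg \<tau> - Ff \<tau>) \<partial>lborel)
     \<le> (\<integral>\<^sup>+\<tau>. indicator I2 \<tau> * ennreal (\<tau> powr (p-2)) * (Ff \<tau> - Fg \<tau>) \<partial>lborel)" by order
  then show ?thesis unfolding decomp by (rule add_left_mono)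
qed
lemma F_meas:
  fixes u :: "'a \<Rightarrow> 'b::{banach, second_countable_topology}"
  assumes sf: "sigma_finite_measure M" and u[measurable]: "u \<in> borel_measurable M"
  shows "(\<lambda>\<tau>. \<integral>\<^sup>+ s\<in>{\<tau>..}. distfun M u s \<partial>lborel) \<in> borel_measurable borel"
proof -
  interpret sigma_finite_measure M by fact
  have h[measurable]: "(\<lambda>x. norm (u x)) \<in> borel_measurable M" by measurable
  have e: "distfun M u s = (\<integral>\<^sup>+x. indicator {x\<in>space M. s < norm (u x)} x \<partial>M)" for s
    unfolding distfun_def by (subst nn_integral_indicator) auto
  have "(\<lambda>\<tau>. \<integral>\<^sup>+ s\<in>{\<tau>..}. distfun M u s \<partial>lborel) = (\<lambda>\<tau>. \<integral>\<^sup>+x. ennreal (norm (u x) - \<tau>) \<partial>M)"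
    unfolding e by (intro ext LC2[OF sf h])
  also have "\<dots> \<in> borel_measurable borel"
    by (rule borel_measurable_nn_integral) measurable
  finally show ?thesis .
qed

lemma per_fun:
  fixes u :: "'a \<Rightarrow> 'b::{banach, second_countable_topology}"
  assumes sf: "sigma_finite_measure M" and u[measurable]: "u \<in> borel_measurable M"
    and q: "1 < q" and int: "integrable M (\<lambda>x. norm (u x) powr q)"
  shows "ennreal (\<integral>x. norm (u x) powr q \<partial>M) = ennreal (q*(q-1)) *
     (\<integral>\<^sup>+\<tau>. indicator {0<..} \<tau> * ennreal (\<tau> powr (q-2)) * (\<integral>\<^sup>+ s\<in>{\<tau>..}. distfun M u s \<partial>lborel) \<partial>lborel)"
proof -
  have h[measurable]: "(\<lambda>x. norm (u x)) \<in> borel_measurable M" by measurable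
  have "ennreal (\<integral>x. norm (u x) powr q \<partial>M) = (\<integral>\<^sup>+x. ennreal (norm (u x) powr q) \<partial>M)"
    by (rule nn_integral_eq_integral[OF int, symmetric]) auto
  also have "\<dots> = ennreal (q*(q-1)) *
     (\<integral>\<^sup>+\<tau>. indicator {0<..} \<tau> * ennreal (\<tau> powr (q-2)) * (\<integral>\<^sup>+ s\<in>{\<tau>..}. distfun M u s \<partial>lborel) \<partial>lborel)"
    unfolding distfun_def by (rule LC[OF sf h _ q]) simp
  finally show ?thesis .
qed

lemma int_p0:
  fixes u :: "'a \<Rightarrow> 'b::{banach, second_countable_topology}"
  assumes u[measurable]: "u \<in> borel_measurable M"
    and pp: "0 < p0" "p0 \<le> p" and int: "integrable M (\<lambda>x. norm (u x) powr p)"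
    and fin: "emeasure M {x \<in> space M. u x \<noteq> 0} < \<infinity>"
  shows "integrable M (\<lambda>x. norm (u x) powr p0)"
proof -
  have [measurable]: "{x \<in> space M. u x \<noteq> 0} \<in> sets M" by measurable
  have i1: "integrable M (\<lambda>x. indicator {x \<in> space M. u x \<noteq> 0} x + norm (u x) powr p :: real)"
    by (rule Bochner_Integration.integrable_add[OF integrable_real_indicator int]) (use fin in \<open>auto simp: less_top\<close>)
  have m1: "(\<lambda>x. norm (u x) powr p0) \<in> borel_measurable M" by measurable
  have ae: "AE x in M. norm (norm (u x) powr p0) \<le> norm (indicator {x \<in> space M. u x \<noteq> 0} x + norm (u x) powr p :: real)"
  proof (intro AE_I2)
    fix x assume x: "x \<in> space M"
    show "norm (norm (u x) powr p0) \<le> norm (indicator {x \<in> space M. u x \<noteq> 0} x + norm (u x) powr p :: real)"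
    proof (cases "u x = 0")
      case False
      show ?thesis
      proof (cases "norm (u x) \<le> 1")
        case True
        have "norm (u x) powr p0 \<le> 1 powr p0" by (rule powr_mono2) (use True pp in auto)
        then have "norm (u x) powr p0 \<le> 1" by simp
        moreover have "0 \<le> norm (u x) powr p" by simp
        ultimately have "norm (u x) powr p0 \<le> 1 + norm (u x) powr p" by linarith
        then show ?thesis using False x by (simp add: indicator_def)
      next
        case nle: False
        have "norm (u x) powr p0 \<le> norm (u x) powr p" by (rule powr_mono) (use nle pp in auto)
        then have "norm (u x) powr p0 \<le> 1 + norm (u x) powr p" by linarith
        then show ?thesis using False x by (simp add: indicator_def)
      qed
    qed simp
  qed
  show ?thesis by (rule Bochner_Integration.integrable_bound[OF i1 m1 ae])
qed

lemma powr_cancel_le: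
  assumes "0 \<le> (x::real)" "0 \<le> y" "0 < r" "x powr (1/r) \<le> y powr (1/r)"
  shows "x \<le> y"
proof -
  have "(x powr (1/r)) powr r \<le> (y powr (1/r)) powr r"
    using assms by (rule_tac powr_mono2) auto
  moreover have "(x powr (1/r)) powr r = x" "(y powr (1/r)) powr r = y"
    using assms by (simp_all add: powr_powr powr_one)
  ultimately show ?thesis by simp
qed

theorem mainTheorem6:
  fixes M :: "'a measure" and f g :: "'a \<Rightarrow> 'b::{banach, second_countable_topology}"
    and p p0 \<tau>1 :: real
  assumes "sigma_finite_measure M"
    and "1 < p0" and "p0 \<le> p"
    and "in_Lp M p f" and "in_Lp M p g"
    and "emeasure M {x \<in> space M. f x \<noteq> 0} < \<infinity>"
    and "emeasure M {x \<in> space M. g x \<noteq> 0} < \<infinity>"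
    and "Lp_norm M p0 g \<le> Lp_norm M p0 f"
    and "0 \<le> \<tau>1"
    and "\<And>\<tau>. \<tau>1 \<le> \<tau> \<Longrightarrow>
           (\<integral>\<^sup>+ s \<in> {\<tau>..}. distfun M g s \<partial>lborel) \<le> (\<integral>\<^sup>+ s \<in> {\<tau>..}. distfun M f s \<partial>lborel)"
    and "\<And>\<tau>. 0 \<le> \<tau> \<Longrightarrow> \<tau> \<le> \<tau>1 \<Longrightarrow>
           (\<integral>\<^sup>+ s \<in> {\<tau>..}. distfun M f s \<partial>lborel) \<le> (\<integral>\<^sup>+ s \<in> {\<tau>..}. distfun M g s \<partial>lborel)"
  shows "Lp_norm M p g \<le> Lp_norm M p f"
proof -
  note sf = assms(1)
  have fm[measurable]: "f \<in> borel_measurable M" and gm[measurable]: "g \<in> borel_measurable M"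
    and fi: "integrable M (\<lambda>x. norm (f x) powr p)" and gi: "integrable M (\<lambda>x. norm (g x) powr p)"
    using assms(4,5) unfolding in_Lp_def by auto
  have p: "1 < p" using assms(2,3) by simp
  have fi0: "integrable M (\<lambda>x. norm (f x) powr p0)"
    by (rule int_p0[OF fm _ assms(3) fi assms(6)]) (use assms(2) in simp)
  have gi0: "integrable M (\<lambda>x. norm (g x) powr p0)"
    by (rule int_p0[OF gm _ assms(3) gi assms(7)]) (use assms(2) in simp)
  define A where "A u q = (\<integral>\<^sup>+\<tau>. indicator {0<..} \<tau> * ennreal (\<tau> powr (q-2)) * (\<integral>\<^sup>+ s\<in>{\<tau>..}. distfun M u s \<partial>lborel) \<partial>lborel)" for u :: "'a \<Rightarrow> 'b" and q
  have Ff0: "ennreal (\<integral>x. norm (f x) powr p0 \<partial>M) = ennreal (p0*(p0-1)) * A f p0"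
    unfolding A_def by (rule per_fun[OF sf fm assms(2) fi0])
  have Gg0: "ennreal (\<integral>x. norm (g x) powr p0 \<partial>M) = ennreal (p0*(p0-1)) * A g p0"
    unfolding A_def by (rule per_fun[OF sf gm assms(2) gi0])
  have Ff: "ennreal (\<integral>x. norm (f x) powr p \<partial>M) = ennreal (p*(p-1)) * A f p"
    unfolding A_def by (rule per_fun[OF sf fm p fi])
  have Gg: "ennreal (\<integral>x. norm (g x) powr p \<partial>M) = ennreal (p*(p-1)) * A g p"
    unfolding A_def by (rule per_fun[OF sf gm p gi])
  have c0: "ennreal (p0*(p0-1)) \<noteq> 0" "ennreal (p0*(p0-1)) \<noteq> top" using assms(2) by auto
  have c: "ennreal (p*(p-1)) \<noteq> 0" "ennreal (p*(p-1)) \<noteq> top" using p by auto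
  have nnf: "0 \<le> (\<integral>x. norm (f x) powr q \<partial>M)" for q by (rule integral_nonneg_AE) simp
  have nng: "0 \<le> (\<integral>x. norm (g x) powr q \<partial>M)" for q by (rule integral_nonneg_AE) simp
  have "(\<integral>x. norm (g x) powr p0 \<partial>M) powr (1/p0) \<le> (\<integral>x. norm (f x) powr p0 \<partial>M) powr (1/p0)"
    using assms(8) unfolding Lp_norm_def .
  then have "(\<integral>x. norm (g x) powr p0 \<partial>M) \<le> (\<integral>x. norm (f x) powr p0 \<partial>M)"
    using assms(2) by (intro powr_cancel_le[OF nng nnf]) auto
  then have "ennreal (p0*(p0-1)) * A g p0 \<le> ennreal (p0*(p0-1)) * A f p0"
    unfolding Ff0[symmetric] Gg0[symmetric] by (rule ennreal_leI)
  then have B: "A g p0 \<le> A f p0" using ennreal_mult_le_mult_iff[OF c0] by simp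
  have "ennreal (p0*(p0-1)) * A f p0 < \<infinity>" unfolding Ff0[symmetric] by simp
  then have Bfin: "A f p0 < \<infinity>" using c0
    by (auto simp: ennreal_mult_less_top)
  have "A g p \<le> A f p"
    unfolding A_def
    by (rule key_ineq[OF F_meas[OF sf fm] F_meas[OF sf gm] assms(3) assms(9) assms(10) assms(11)
       B[unfolded A_def] Bfin[unfolded A_def]])
  then have "ennreal (\<integral>x. norm (g x) powr p \<partial>M) \<le> ennreal (\<integral>x. norm (f x) powr p \<partial>M)"
    unfolding Ff Gg by (rule mult_left_mono) simp
  then have fin_ineq: "(\<integral>x. norm (g x) powr p \<partial>M) \<le> (\<integral>x. norm (f x) powr p \<partial>M)"
    using ennreal_le_iff[OF nnf[of p]] by simp
  show ?thesis unfolding Lp_norm_def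
    by (rule powr_mono2[OF _ nng fin_ineq]) (use p in simp)
qed

end
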